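(* Let $m,k\ge1$, $N=m+k$, let $\Phi$ be a Minkowski norm on $\mathbb{R}^m$ and $\Psi$ a Minkowski norm on $\mathbb{R}^k$, with dual norms $\Phi^0,\Psi^0$. For $\varepsilon>0$ let $K(z,\sigma)=(\varepsilon^2+\Phi^0(z)^2)^2+16\,\Psi^0(\sigma)^2$ on $\mathbb{R}^N$. Then $$\Phi(\nabla_z K)^2+\frac{\Phi^0(z)^2}{4}\Psi(\nabla_\sigma K)^2=16\,\Phi^0(z)^2\,K.$$
   Context: Points of $\mathbb{R}^N=\mathbb{R}^m\times\mathbb{R}^k$ are written $(z,\sigma)$. A Minkowski norm on $\mathbb{R}^n$ is a function $M:\mathbb{R}^n\to[0,\infty)$ such that $M^2\in C^2(\mathbb{R}^n\setminus\{0\})$ is strictly convex and $M(\lambda x)=|\lambda|M(x)$ for all $x$, $\lambda\in\mathbb{R}$; its dual norm is $M^0(x)=\sup_{M(\xi)=1}\langle x,\xi\rangle$. *)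

theory Defs
  imports "HOL-Analysis.Analysis"
begin

definition C2_on :: "('a::euclidean_space \<Rightarrow> real) \<Rightarrow> 'a set \<Rightarrow> bool" where
  "C2_on f U \<longleftrightarrow>
     (\<exists>Df :: 'a \<Rightarrow> ('a \<Rightarrow>\<^sub>L real). \<exists>D2f :: 'a \<Rightarrow> ('a \<Rightarrow>\<^sub>L ('a \<Rightarrow>\<^sub>L real)).
        (\<forall>x\<in>U. (f has_derivative blinfun_apply (Df x)) (at x)) \<and>
        (\<forall>x\<in>U. (Df has_derivative blinfun_apply (D2f x)) (at x)) \<and>
        continuous_on U D2f)"

definition strictly_convex_fun :: "('a::real_vector \<Rightarrow> real) \<Rightarrow> bool" where
  "strictly_convex_fun f \<longleftrightarrow>
     (\<forall>x y t. x \<noteq> y \<longrightarrow> 0 < t \<longrightarrow> t < 1 \<longrightarrow>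
        f ((1 - t) *\<^sub>R x + t *\<^sub>R y) < (1 - t) * f x + t * f y)"

definition minkowski_norm :: "(real^'n \<Rightarrow> real) \<Rightarrow> bool" where
  "minkowski_norm M \<longleftrightarrow>
     (\<forall>x. 0 \<le> M x) \<and>
     C2_on (\<lambda>x. (M x)\<^sup>2) (UNIV - {0}) \<and>
     strictly_convex_fun (\<lambda>x. (M x)\<^sup>2) \<and>
     (\<forall>x c. M (c *\<^sub>R x) = \<bar>c\<bar> * M x)"

definition dual_norm :: "(real^'n \<Rightarrow> real) \<Rightarrow> real^'n \<Rightarrow> real" where
  "dual_norm M x = (SUP \<xi>\<in>{\<xi>. M \<xi> = 1}. x \<bullet> \<xi>)"

end

theory Submission imports Defs begin

context
  fixes M :: "real^'n \<Rightarrow> real"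
  assumes mn: "minkowski_norm M"
begin

lemma mn_nonneg: "0 \<le> M x" using mn by (simp add: minkowski_norm_def)
lemma mn_hom: "M (c *\<^sub>R x) = \<bar>c\<bar> * M x" using mn by (simp add: minkowski_norm_def)
lemma mn_sc: "strictly_convex_fun (\<lambda>x. (M x)\<^sup>2)" using mn by (simp add: minkowski_norm_def)

lemma sc_inst: "x \<noteq> y \<Longrightarrow> 0 < t \<Longrightarrow> t < 1 \<Longrightarrow>
   (M ((1 - t) *\<^sub>R x + t *\<^sub>R y))\<^sup>2 < (1 - t) * (M x)\<^sup>2 + t * (M y)\<^sup>2"
  using mn_sc unfolding strictly_convex_fun_def by blast

lemma mn_zero: "M 0 = 0"
  using mn_hom[of 0 0] by simp

lemma mn_pos: assumes "x \<noteq> 0" shows "0 < M x"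
proof (rule ccontr)
  assume "\<not> 0 < M x"
  hence M0: "M x = 0" using mn_nonneg[of x] by simp
  have "x \<noteq> 3 *\<^sub>R x"
  proof
    assume "x = 3 *\<^sub>R x"
    hence "(3::real) *\<^sub>R x - 1 *\<^sub>R x = 0" by simp
    hence "(3 - 1::real) *\<^sub>R x = 0" by (simp only: scaleR_diff_left)
    thus False using assms by simp
  qed
  hence "(M ((1 - 1/2) *\<^sub>R x + (1/2) *\<^sub>R (3 *\<^sub>R x)))\<^sup>2 < (1 - 1/2) * (M x)\<^sup>2 + (1/2) * (M (3 *\<^sub>R x))\<^sup>2"
    using mn_sc unfolding strictly_convex_fun_def by (metis divide_pos_pos zero_less_one zero_less_numeral one_less_numeral_iff semiring_norm(76) divide_less_eq_1_pos)
  moreover have "(1 - 1/2) *\<^sub>R x + (1/2) *\<^sub>R (3 *\<^sub>R x) = (2::real) *\<^sub>R x" by (simp add: scaleR_add_left[symmetric])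
  ultimately show False using M0 mn_hom by simp
qed

lemma mn_convex_sq: "convex_on UNIV (\<lambda>x. (M x)\<^sup>2)"
  unfolding convex_on_def
proof (intro conjI ballI allI impI)
  fix x y :: "real^'n" and u v :: real
  assume uv: "0 \<le> u" "0 \<le> v" "u + v = 1"
  show "(M (u *\<^sub>R x + v *\<^sub>R y))\<^sup>2 \<le> u * (M x)\<^sup>2 + v * (M y)\<^sup>2"
  proof (cases "x = y \<or> u = 0 \<or> v = 0")
    case True
    moreover have "u * a + v * a = a" for a by (metis uv(3) distrib_right mult_1)
    ultimately show ?thesis using uv by (auto simp: scaleR_add_left[symmetric])
  next
    case False
    then have "u = 1 - v" "0 < v" "v < 1" "x \<noteq> y" using uv by auto
    then show ?thesis using mn_sc unfolding strictly_convex_fun_def by (metis less_imp_le)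
  qed
qed simp

lemma mn_cont: "continuous_on UNIV M"
proof -
  have "continuous_on UNIV (\<lambda>x. (M x)\<^sup>2)"
    by (rule convex_on_continuous[OF open_UNIV mn_convex_sq])
  hence "continuous_on UNIV (\<lambda>x. sqrt ((M x)\<^sup>2))" by (rule continuous_on_real_sqrt)
  moreover have "(\<lambda>x. sqrt ((M x)\<^sup>2)) = M" by (rule ext) (simp add: mn_nonneg)
  ultimately show ?thesis by metis
qed


lemma ex_nonzero: "\<exists>v::real^'n. v \<noteq> 0"
  by (rule exI[of _ "axis undefined 1"]) simp

lemma mn_lower: "\<exists>c>0. \<forall>x. c * norm x \<le> M x"
proof -
  obtain v :: "real^'n" where v: "v \<noteq> 0" using ex_nonzero by blast
  have ne: "sphere (0::real^'n) 1 \<noteq> {}"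
    using v by (auto intro!: exI[of _ "(1/norm v) *\<^sub>R v"])
  obtain x0 where x0: "x0 \<in> sphere 0 1" "\<forall>y\<in>sphere 0 1. M x0 \<le> M y"
    using continuous_attains_inf[OF compact_sphere ne continuous_on_subset[OF mn_cont]] by blast
  have "x0 \<noteq> 0" using x0(1) by auto
  hence c: "0 < M x0" using mn_pos by auto
  have "M x0 * norm x \<le> M x" for x
  proof (cases "x = 0")
    case True then show ?thesis by (simp add: mn_zero)
  next
    case False
    have "(1/norm x) *\<^sub>R x \<in> sphere 0 1" using False by simp
    hence "M x0 \<le> M ((1/norm x) *\<^sub>R x)" using x0(2) by blast
    also have "\<dots> = M x / norm x" using mn_hom by simp
    finally show ?thesis using False by (simp add: field_simps)
  qed
  thus ?thesis using c by blast
qed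

definition "cB = (SOME B. B > 0 \<and> (\<forall>x. norm x \<le> B * M x))"

lemma cB: "cB > 0" "norm x \<le> cB * M x"
proof -
  obtain c where c: "c > 0" "\<forall>x. c * norm x \<le> M x" using mn_lower by blast
  have "\<exists>B. B > 0 \<and> (\<forall>x. norm x \<le> B * M x)"
    apply (rule exI[of _ "1/c"]) using c by (auto simp: field_simps)
  from someI_ex[OF this] show "cB > 0" "norm x \<le> cB * M x" unfolding cB_def by auto
qed

definition "SS = {\<xi>. M \<xi> = 1}"

lemma SS_compact: "compact SS"
unfolding compact_eq_bounded_closed proof
  show "closed SS" unfolding SS_def by (rule closed_Collect_eq[OF mn_cont continuous_on_const])
  show "bounded SS" unfolding bounded_iff SS_def using cB(2) by (metis mem_Collect_eq mult_1_right)
qed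

lemma SS_norm: "\<xi> \<in> SS \<Longrightarrow> norm \<xi> \<le> cB" using cB(2)[of \<xi>] by (simp add: SS_def)

lemma SS_scale: "x \<noteq> 0 \<Longrightarrow> (1 / M x) *\<^sub>R x \<in> SS"
  using mn_pos[of x] by (simp add: SS_def mn_hom)

lemma SS_ne: "SS \<noteq> {}" using SS_scale ex_nonzero by blast

lemma SS_neg: "\<xi> \<in> SS \<Longrightarrow> - \<xi> \<in> SS"
  using mn_hom[of "-1" \<xi>] by (simp add: SS_def)

lemma dual_attained: "\<exists>\<xi>\<in>SS. dual_norm M x = x \<bullet> \<xi> \<and> (\<forall>\<eta>\<in>SS. x \<bullet> \<eta> \<le> x \<bullet> \<xi>)"
proof -
  obtain \<xi> where \<xi>: "\<xi> \<in> SS" "\<forall>\<eta>\<in>SS. x \<bullet> \<eta> \<le> x \<bullet> \<xi>"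
    using continuous_attains_sup[OF SS_compact SS_ne continuous_on_inner[OF continuous_on_const continuous_on_id], of x]
    by auto
  have "dual_norm M x = x \<bullet> \<xi>"
    unfolding dual_norm_def SS_def[symmetric]
    by (rule cSup_eq_maximum) (use \<xi> in auto)
  thus ?thesis using \<xi> by blast
qed

lemma dual_ge: "\<eta> \<in> SS \<Longrightarrow> x \<bullet> \<eta> \<le> dual_norm M x"
  using dual_attained[of x] by auto

lemma dual_nonneg: "0 \<le> dual_norm M x"
proof -
  obtain \<xi> where "\<xi> \<in> SS" using SS_ne by blast
  thus ?thesis using dual_ge[of \<xi> x] dual_ge[of "-\<xi>" x] SS_neg by force
qed

lemma dual_pos: "x \<noteq> 0 \<Longrightarrow> 0 < dual_norm M x"
proof -
  assume x: "x \<noteq> 0"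
  have "0 < x \<bullet> ((1 / M x) *\<^sub>R x)" using x mn_pos[OF x] by simp
  thus ?thesis using dual_ge[OF SS_scale[OF x], of x] by linarith
qed

lemma dual_zero: "dual_norm M 0 = 0"
  using dual_attained[of 0] by auto

lemma inner_bound: "\<xi> \<in> SS \<Longrightarrow> \<bar>y \<bullet> \<xi>\<bar> \<le> cB * norm y"
proof -
  assume "\<xi> \<in> SS"
  hence "\<bar>y \<bullet> \<xi>\<bar> \<le> norm y * norm \<xi>" "norm \<xi> \<le> cB" using Cauchy_Schwarz_ineq2 SS_norm by auto
  thus ?thesis by (metis mult.commute mult_left_mono norm_ge_zero order_trans)
qed

lemma dual_lip: "\<bar>dual_norm M y - dual_norm M x\<bar> \<le> cB * norm (y - x)"
proof -
  have *: "dual_norm M a - cB * norm (a - b) \<le> dual_norm M b" for a b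
  proof -
    obtain \<xi> where \<xi>: "\<xi> \<in> SS" "dual_norm M a = a \<bullet> \<xi>" using dual_attained by blast
    have "b \<bullet> \<xi> = a \<bullet> \<xi> - (a - b) \<bullet> \<xi>" by (simp add: inner_diff_left)
    thus ?thesis using inner_bound[OF \<xi>(1), of "a - b"] dual_ge[OF \<xi>(1), of b] \<xi>(2) by linarith
  qed
  show ?thesis using *[of y x] *[of x y] by (simp add: norm_minus_commute abs_le_iff)
qed

lemma dual_unique:
  assumes x: "x \<noteq> 0" and a: "\<xi>1 \<in> SS" "x \<bullet> \<xi>1 = dual_norm M x"
    and b: "\<xi>2 \<in> SS" "x \<bullet> \<xi>2 = dual_norm M x"
  shows "\<xi>1 = \<xi>2"
proof (rule ccontr)
  assume ne: "\<xi>1 \<noteq> \<xi>2"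
  define m where "m = (1 - 1/2) *\<^sub>R \<xi>1 + (1/2::real) *\<^sub>R \<xi>2"
  have "(M m)\<^sup>2 < (1 - 1/2) * (M \<xi>1)\<^sup>2 + (1/2) * (M \<xi>2)\<^sup>2"
    unfolding m_def by (rule sc_inst[OF ne]) simp_all
  hence Mm: "M m < 1" using a b mn_nonneg[of m] by (simp add: SS_def) (smt (verit) one_le_power)
  have xm: "x \<bullet> m = dual_norm M x" using a b by (simp add: m_def inner_add_right)
  have "m \<noteq> 0" using xm dual_pos[OF x] by auto
  hence Mp: "0 < M m" using mn_pos by blast
  have "x \<bullet> ((1 / M m) *\<^sub>R m) \<le> dual_norm M x" using dual_ge[OF SS_scale[OF \<open>m \<noteq> 0\<close>]] .
  hence "dual_norm M x / M m \<le> dual_norm M x" using xm by simp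
  thus False using Mm Mp dual_pos[OF x] by (simp add: divide_le_eq)
qed

definition "xi x = (SOME \<xi>. \<xi> \<in> SS \<and> x \<bullet> \<xi> = dual_norm M x)"
definition "gg x = dual_norm M x *\<^sub>R xi x"

lemma xi: "xi x \<in> SS" "x \<bullet> xi x = dual_norm M x"
proof -
  have "\<exists>\<xi>. \<xi> \<in> SS \<and> x \<bullet> \<xi> = dual_norm M x" using dual_attained[of x] by metis
  from someI_ex[OF this] show "xi x \<in> SS" "x \<bullet> xi x = dual_norm M x" unfolding xi_def by auto
qed

lemma M_gg: "M (gg x) = dual_norm M x"
  using xi(1)[of x] dual_nonneg[of x] by (simp add: gg_def mn_hom SS_def)

lemma dual_cont: "isCont (dual_norm M) x"
  unfolding continuous_at_eps_delta
proof (intro allI impI)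
  fix e :: real assume e: "e > 0"
  show "\<exists>d>0. \<forall>y. dist y x < d \<longrightarrow> dist (dual_norm M y) (dual_norm M x) < e"
  proof (intro exI[of _ "e / cB"] conjI allI impI)
    show "0 < e / cB" using e cB(1) by simp
    fix y assume "dist y x < e / cB"
    hence "cB * norm (y - x) < e" using cB(1) by (simp add: dist_norm field_simps)
    thus "dist (dual_norm M y) (dual_norm M x) < e" using dual_lip[of y x] by (simp add: dist_real_def)
  qed
qed

lemma xi_cont: assumes x: "x \<noteq> 0" shows "isCont xi x"
  unfolding continuous_at_eps_delta
proof (intro allI impI)
  fix e :: real assume e: "e > 0"
  define T where "T = SS \<inter> {\<eta>. e \<le> norm (\<eta> - xi x)}"
  show "\<exists>d>0. \<forall>y. dist y x < d \<longrightarrow> dist (xi y) (xi x) < e"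
  proof (cases "T = {}")
    case True
    show ?thesis
    proof (intro exI[of _ 1] conjI allI impI)
      fix y assume "dist y x < 1"
      show "dist (xi y) (xi x) < e" using True xi(1)[of y] by (auto simp: T_def dist_norm not_le)
    qed simp
  next
    case False
    have "closed {\<eta>. e \<le> norm (\<eta> - xi x)}"
      by (rule closed_Collect_le) (intro continuous_intros)+
    hence cT: "compact T" unfolding T_def using SS_compact by (simp add: compact_Int_closed)
    obtain \<eta>0 where \<eta>0: "\<eta>0 \<in> T" "\<forall>\<eta>\<in>T. x \<bullet> \<eta> \<le> x \<bullet> \<eta>0"
      using continuous_attains_sup[OF cT False continuous_on_inner[OF continuous_on_const continuous_on_id], of x]
      by auto
    have "x \<bullet> \<eta>0 \<noteq> dual_norm M x"
    proof
      assume "x \<bullet> \<eta>0 = dual_norm M x"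
      hence "\<eta>0 = xi x" using dual_unique[OF x _ _ xi(1) xi(2)] \<eta>0(1) by (auto simp: T_def)
      thus False using \<eta>0(1) e by (simp add: T_def)
    qed
    moreover have "x \<bullet> \<eta>0 \<le> dual_norm M x" using \<eta>0(1) dual_ge by (auto simp: T_def)
    ultimately have "x \<bullet> \<eta>0 < dual_norm M x" by simp
    define \<delta> where "\<delta> = dual_norm M x - x \<bullet> \<eta>0"
    have \<delta>: "\<delta> > 0" using \<open>x \<bullet> \<eta>0 < dual_norm M x\<close> by (simp add: \<delta>_def)
    show ?thesis
    proof (intro exI[of _ "\<delta> / (2 * cB)"] conjI allI impI)
      show "0 < \<delta> / (2 * cB)" using \<delta> cB(1) by simp
      fix y assume "dist y x < \<delta> / (2 * cB)"
      hence r: "2 * (cB * norm (y - x)) < \<delta>" using cB(1) by (simp add: dist_norm field_simps)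
      show "dist (xi y) (xi x) < e"
      proof (rule ccontr)
        assume "\<not> dist (xi y) (xi x) < e"
        hence "xi y \<in> T" using xi(1)[of y] by (auto simp: T_def dist_norm)
        hence a: "x \<bullet> xi y \<le> x \<bullet> \<eta>0" using \<eta>0(2) by blast
        have b: "y \<bullet> xi y = x \<bullet> xi y + (y - x) \<bullet> xi y" by (simp add: inner_diff_left)
        have c: "\<bar>(y - x) \<bullet> xi y\<bar> \<le> cB * norm (y - x)" using inner_bound[OF xi(1)] .
        have d: "\<bar>dual_norm M y - dual_norm M x\<bar> \<le> cB * norm (y - x)" by (rule dual_lip)
        show False using a b c d r xi(2)[of y] by (simp add: \<delta>_def abs_le_iff)
      qed
    qed
  qed
qed

lemma dual_le: "dual_norm M x \<le> cB * norm x"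
  using dual_lip[of x 0] dual_zero by simp

lemma gg_cont: "isCont gg x"
proof (cases "x = 0")
  case False
  show ?thesis unfolding gg_def[abs_def]
    by (intro continuous_intros dual_cont xi_cont False)
next
  case True
  show ?thesis unfolding continuous_at_eps_delta
  proof (intro allI impI)
    fix e :: real assume e: "e > 0"
    show "\<exists>d>0. \<forall>y. dist y x < d \<longrightarrow> dist (gg y) (gg x) < e"
    proof (intro exI[of _ "e / (cB * cB)"] conjI allI impI)
      show "0 < e / (cB * cB)" using e cB(1) by simp
      fix y assume "dist y x < e / (cB * cB)"
      hence r: "cB * cB * norm y < e" using cB(1) True by (simp add: dist_norm field_simps)
      have "norm (gg y) = dual_norm M y * norm (xi y)" using dual_nonneg[of y] by (simp add: gg_def)
      also have "\<dots> \<le> (cB * norm y) * cB"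
        by (rule mult_mono[OF dual_le SS_norm[OF xi(1)]]) (use cB(1) in simp_all)
      finally show "dist (gg y) (gg x) < e" using r True dual_zero by (simp add: gg_def dist_norm mult_ac)
    qed
  qed
qed

lemma key_ineq: "2 * (gg x \<bullet> (y - x)) \<le> (dual_norm M y)\<^sup>2 - (dual_norm M x)\<^sup>2"
proof -
  have "gg x \<bullet> (y - x) = dual_norm M x * (y \<bullet> xi x) - dual_norm M x * dual_norm M x"
    using xi(2)[of x] by (simp add: gg_def inner_diff_left inner_commute right_diff_distrib)
  moreover have "dual_norm M x * (y \<bullet> xi x) \<le> dual_norm M x * dual_norm M y"
    by (rule mult_left_mono[OF dual_ge[OF xi(1)] dual_nonneg])
  moreover have "0 \<le> (dual_norm M y - dual_norm M x)\<^sup>2" by simp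
  ultimately show ?thesis by (simp add: power2_eq_square algebra_simps)
qed

lemma dual_sq_deriv: "((\<lambda>y. (dual_norm M y)\<^sup>2) has_derivative (\<lambda>h. (2 *\<^sub>R gg x) \<bullet> h)) (at x)"
  unfolding has_derivative_at_alt
proof (intro conjI allI impI)
  show "bounded_linear (\<lambda>h. (2 *\<^sub>R gg x) \<bullet> h)" by (rule bounded_linear_inner_right)
  fix e :: real assume e: "e > 0"
  obtain d where d: "d > 0" "\<forall>y. dist y x < d \<longrightarrow> dist (gg y) (gg x) < e / 2"
    using gg_cont[of x] e unfolding continuous_at_eps_delta by (meson half_gt_zero)
  show "\<exists>d>0. \<forall>y. norm (y - x) < d \<longrightarrow>
      norm ((dual_norm M y)\<^sup>2 - (dual_norm M x)\<^sup>2 - (2 *\<^sub>R gg x) \<bullet> (y - x)) \<le> e * norm (y - x)"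
  proof (intro exI[of _ d] conjI allI impI)
    show "d > 0" by fact
    fix y assume y: "norm (y - x) < d"
    hence g: "norm (gg y - gg x) < e / 2" using d(2) by (simp add: dist_norm)
    have l: "2 * (gg x \<bullet> (y - x)) \<le> (dual_norm M y)\<^sup>2 - (dual_norm M x)\<^sup>2" by (rule key_ineq)
    have u: "2 * (gg y \<bullet> (x - y)) \<le> (dual_norm M x)\<^sup>2 - (dual_norm M y)\<^sup>2" by (rule key_ineq)
    have "(gg y - gg x) \<bullet> (y - x) \<le> norm (gg y - gg x) * norm (y - x)" by (rule norm_cauchy_schwarz)
    also have "\<dots> \<le> e / 2 * norm (y - x)" using g by (intro mult_right_mono) simp_all
    finally have cs: "(gg y - gg x) \<bullet> (y - x) \<le> e / 2 * norm (y - x)" .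
    have "gg y \<bullet> (x - y) = - (gg y \<bullet> (y - x))" by (simp add: inner_diff_right)
    moreover have "(gg y - gg x) \<bullet> (y - x) = gg y \<bullet> (y - x) - gg x \<bullet> (y - x)" by (simp add: inner_diff_left)
    ultimately show "norm ((dual_norm M y)\<^sup>2 - (dual_norm M x)\<^sup>2 - (2 *\<^sub>R gg x) \<bullet> (y - x)) \<le> e * norm (y - x)"
      using l u cs by (simp add: abs_le_iff)
  qed
qed

end

theorem lemma2p5:
  fixes \<Phi> :: "real^'m \<Rightarrow> real" and \<Psi> :: "real^'k \<Rightarrow> real"
    and \<epsilon> :: real and z :: "real^'m" and \<sigma> :: "real^'k"
    and K :: "real^'m \<Rightarrow> real^'k \<Rightarrow> real"
  assumes "minkowski_norm \<Phi>" and "minkowski_norm \<Psi>" and "\<epsilon> > 0"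
    and K_def: "\<And>w s. K w s = (\<epsilon>\<^sup>2 + (dual_norm \<Phi> w)\<^sup>2)\<^sup>2 + 16 * (dual_norm \<Psi> s)\<^sup>2"
  shows "\<exists>gz gs. ((\<lambda>w. K w \<sigma>) has_derivative (\<lambda>h. gz \<bullet> h)) (at z) \<and>
                ((\<lambda>s. K z s) has_derivative (\<lambda>h. gs \<bullet> h)) (at \<sigma>) \<and>
                (\<Phi> gz)\<^sup>2 + (dual_norm \<Phi> z)\<^sup>2 / 4 * (\<Psi> gs)\<^sup>2
                  = 16 * (dual_norm \<Phi> z)\<^sup>2 * K z \<sigma>"
proof -
  note P = assms(1) and Q = assms(2)
  define a where "a = dual_norm \<Phi> z"
  define b where "b = dual_norm \<Psi> \<sigma>"
  define gz where "gz = (2 * (\<epsilon>\<^sup>2 + a\<^sup>2)) *\<^sub>R (2 *\<^sub>R gg \<Phi> z)"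
  define gs where "gs = 16 *\<^sub>R (2 *\<^sub>R gg \<Psi> \<sigma>)"
  have dz: "((\<lambda>w. K w \<sigma>) has_derivative (\<lambda>h. gz \<bullet> h)) (at z)"
  proof -
    have d1: "((\<lambda>w. (dual_norm \<Phi> w)\<^sup>2) has_derivative (\<lambda>h. (2 *\<^sub>R gg \<Phi> z) \<bullet> h)) (at z)"
      by (rule dual_sq_deriv[OF P])
    have d2: "((\<lambda>w. \<epsilon>\<^sup>2 + (dual_norm \<Phi> w)\<^sup>2) has_derivative (\<lambda>h. 0 + (2 *\<^sub>R gg \<Phi> z) \<bullet> h)) (at z)"
      by (rule has_derivative_add[OF has_derivative_const d1])
    have d3: "((\<lambda>w. (\<epsilon>\<^sup>2 + (dual_norm \<Phi> w)\<^sup>2) * (\<epsilon>\<^sup>2 + (dual_norm \<Phi> w)\<^sup>2)) has_derivative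
       (\<lambda>h. (\<epsilon>\<^sup>2 + a\<^sup>2) * (0 + (2 *\<^sub>R gg \<Phi> z) \<bullet> h) + (0 + (2 *\<^sub>R gg \<Phi> z) \<bullet> h) * (\<epsilon>\<^sup>2 + a\<^sup>2))) (at z)"
      unfolding a_def by (rule has_derivative_mult[OF d2 d2])
    have d4: "((\<lambda>w. (\<epsilon>\<^sup>2 + (dual_norm \<Phi> w)\<^sup>2) * (\<epsilon>\<^sup>2 + (dual_norm \<Phi> w)\<^sup>2) + 16 * b\<^sup>2) has_derivative
       (\<lambda>h. (\<epsilon>\<^sup>2 + a\<^sup>2) * (0 + (2 *\<^sub>R gg \<Phi> z) \<bullet> h) + (0 + (2 *\<^sub>R gg \<Phi> z) \<bullet> h) * (\<epsilon>\<^sup>2 + a\<^sup>2) + 0)) (at z)"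
      by (rule has_derivative_add[OF d3 has_derivative_const])
    have e1: "(\<lambda>w. K w \<sigma>) = (\<lambda>w. (\<epsilon>\<^sup>2 + (dual_norm \<Phi> w)\<^sup>2) * (\<epsilon>\<^sup>2 + (dual_norm \<Phi> w)\<^sup>2) + 16 * b\<^sup>2)"
      by (rule ext) (simp add: K_def b_def power2_eq_square)
    have e2: "(\<lambda>h. gz \<bullet> h) = (\<lambda>h. (\<epsilon>\<^sup>2 + a\<^sup>2) * (0 + (2 *\<^sub>R gg \<Phi> z) \<bullet> h) + (0 + (2 *\<^sub>R gg \<Phi> z) \<bullet> h) * (\<epsilon>\<^sup>2 + a\<^sup>2) + 0)"
      by (rule ext) (simp add: gz_def algebra_simps)
    show ?thesis unfolding e1 e2 by (rule d4)
  qed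
  have ds: "((\<lambda>s. K z s) has_derivative (\<lambda>h. gs \<bullet> h)) (at \<sigma>)"
  proof -
    have d1: "((\<lambda>s. (dual_norm \<Psi> s)\<^sup>2) has_derivative (\<lambda>h. (2 *\<^sub>R gg \<Psi> \<sigma>) \<bullet> h)) (at \<sigma>)"
      by (rule dual_sq_deriv[OF Q])
    have d2: "((\<lambda>s. (\<epsilon>\<^sup>2 + a\<^sup>2)\<^sup>2 + 16 * (dual_norm \<Psi> s)\<^sup>2) has_derivative (\<lambda>h. 0 + 16 * ((2 *\<^sub>R gg \<Psi> \<sigma>) \<bullet> h))) (at \<sigma>)"
      by (rule has_derivative_add[OF has_derivative_const has_derivative_mult_right[OF d1]])
    have e1: "(\<lambda>s. K z s) = (\<lambda>s. (\<epsilon>\<^sup>2 + a\<^sup>2)\<^sup>2 + 16 * (dual_norm \<Psi> s)\<^sup>2)"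
      by (rule ext) (simp add: K_def a_def)
    have e2: "(\<lambda>h. gs \<bullet> h) = (\<lambda>h. 0 + 16 * ((2 *\<^sub>R gg \<Psi> \<sigma>) \<bullet> h))"
      by (rule ext) (simp add: gs_def)
    show ?thesis unfolding e1 e2 by (rule d2)
  qed
  have a0: "0 \<le> a" unfolding a_def by (rule dual_nonneg[OF P])
  have "\<Phi> gz = 4 * (\<epsilon>\<^sup>2 + a\<^sup>2) * a"
    using a0 by (simp add: gz_def mn_hom[OF P] M_gg[OF P] a_def[symmetric])
  moreover have "\<Psi> gs = 32 * b"
    by (simp add: gs_def mn_hom[OF Q] M_gg[OF Q] b_def[symmetric])
  moreover have "K z \<sigma> = (\<epsilon>\<^sup>2 + a\<^sup>2)\<^sup>2 + 16 * b\<^sup>2" by (simp add: K_def a_def b_def)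
  ultimately have "(\<Phi> gz)\<^sup>2 + (dual_norm \<Phi> z)\<^sup>2 / 4 * (\<Psi> gs)\<^sup>2 = 16 * (dual_norm \<Phi> z)\<^sup>2 * K z \<sigma>"
    unfolding a_def[symmetric] by (simp add: power2_eq_square algebra_simps)
  thus ?thesis using dz ds by blast
qed

end
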